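(* Let $S>0$, let $I\ge 1$, let $N_1,\dots,N_I$ be positive integers and let $\theta_1>\theta_2>\dots>\theta_I>0$. Consider the single pricing problem $$\max_{p>0,\ \{n_i\}}\ p\sum_{i=1}^I n_i s_i\quad\text{s.t.}\quad s_i=\Big(\frac{\theta_i}{p}-1\Big)^+,\ \ n_i\in\{0,1,\dots,N_i\}\ (i=1,\dots,I),\quad \sum_{i=1}^I n_i s_i\le S,$$ where $(x)^+=\max(x,0)$. For $k\in\{1,\dots,I\}$ let $p(k)=\frac{\sum_{i=1}^k N_i\theta_i}{S+\sum_{i=1}^k N_i}$, let $K^{sp}=\max\{k\in\{1,\dots,I\}:\theta_k>p(k)\}$ (this set contains $k=1$), and let $p^*=p(K^{sp})$. Then this problem has an optimal solution in which $n_i=N_i$ for all $i$, the price is $p^*$, and the resulting allocations are $s_i=\theta_i/p^*-1$ for $i=1,\dots,K^{sp}$ and $s_i=0$ for $i=K^{sp}+1,\dots,I$.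
   Context: Each user of group $i$ has utility $\theta_i\ln(1+s)$ for $s$ units of resource and, facing unit price $p$, demands $(\theta_i/p-1)^+$. The service provider has total resource $S$, charges one common unit price $p$ to all users, and chooses the number $n_i$ of admitted users of each group. *)

theory Defs
  imports Complex_Main
begin

definition pos_part :: "real \<Rightarrow> real" where
  "pos_part x = max x 0"

definition demand :: "real \<Rightarrow> real \<Rightarrow> real" where
  "demand th p = pos_part (th / p - 1)"

definition used :: "nat \<Rightarrow> (nat \<Rightarrow> real) \<Rightarrow> real \<Rightarrow> (nat \<Rightarrow> nat) \<Rightarrow> real" where
  "used I \<theta> p n = (\<Sum>i=1..I. real (n i) * demand (\<theta> i) p)"

definition revenue :: "nat \<Rightarrow> (nat \<Rightarrow> real) \<Rightarrow> real \<Rightarrow> (nat \<Rightarrow> nat) \<Rightarrow> real" where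
  "revenue I \<theta> p n = p * used I \<theta> p n"

definition feasible :: "nat \<Rightarrow> (nat \<Rightarrow> nat) \<Rightarrow> (nat \<Rightarrow> real) \<Rightarrow> real \<Rightarrow> real \<Rightarrow> (nat \<Rightarrow> nat) \<Rightarrow> bool" where
  "feasible I N \<theta> S p n \<longleftrightarrow> p > 0 \<and> (\<forall>i\<in>{1..I}. n i \<le> N i) \<and> used I \<theta> p n \<le> S"

definition pk :: "(nat \<Rightarrow> nat) \<Rightarrow> (nat \<Rightarrow> real) \<Rightarrow> real \<Rightarrow> nat \<Rightarrow> real" where
  "pk N \<theta> S k = (\<Sum>i=1..k. real (N i) * \<theta> i) / (S + (\<Sum>i=1..k. real (N i)))"

definition Ksp :: "nat \<Rightarrow> (nat \<Rightarrow> nat) \<Rightarrow> (nat \<Rightarrow> real) \<Rightarrow> real \<Rightarrow> nat" where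
  "Ksp I N \<theta> S = Max {k \<in> {1..I}. \<theta> k > pk N \<theta> S k}"

end

theory Submission
  imports Defs
begin

lemma pd: "p > 0 \<Longrightarrow> p * demand th p = max (th - p) 0"
  unfolding demand_def pos_part_def
  by (auto simp: max_def field_simps)

lemma rev_eq: "p > 0 \<Longrightarrow> revenue I \<theta> p n = (\<Sum>i=1..I. real (n i) * max (\<theta> i - p) 0)"
  unfolding revenue_def used_def sum_distrib_left
  by (rule sum.cong) (auto simp: pd[symmetric] algebra_simps)

theorem theorem2:
  fixes I :: nat and N :: "nat \<Rightarrow> nat" and \<theta> :: "nat \<Rightarrow> real" and S :: real
  assumes "S > 0" and "I \<ge> 1"
    and "\<forall>i\<in>{1..I}. N i \<ge> 1"
    and "\<forall>i\<in>{1..I}. \<forall>j\<in>{1..I}. i < j \<longrightarrow> \<theta> i > \<theta> j"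
    and "\<forall>i\<in>{1..I}. \<theta> i > 0"
  shows "1 \<in> {k \<in> {1..I}. \<theta> k > pk N \<theta> S k}
    \<and> feasible I N \<theta> S (pk N \<theta> S (Ksp I N \<theta> S)) N
    \<and> (\<forall>p n. feasible I N \<theta> S p n \<longrightarrow>
          revenue I \<theta> p n \<le> revenue I \<theta> (pk N \<theta> S (Ksp I N \<theta> S)) N)
    \<and> (\<forall>i\<in>{1..Ksp I N \<theta> S}. demand (\<theta> i) (pk N \<theta> S (Ksp I N \<theta> S))
          = \<theta> i / pk N \<theta> S (Ksp I N \<theta> S) - 1)
    \<and> (\<forall>i\<in>{Ksp I N \<theta> S + 1..I}. demand (\<theta> i) (pk N \<theta> S (Ksp I N \<theta> S)) = 0)"
proof -
  note S = assms(1) and I1 = assms(2) and Npos = assms(3) and mono = assms(4) and tpos = assms(5)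
  define A where "A k = (\<Sum>i=1..k. real (N i) * \<theta> i)" for k
  define B where "B k = S + (\<Sum>i=1..k. real (N i))" for k
  have pkAB: "pk N \<theta> S k = A k / B k" for k unfolding pk_def A_def B_def by simp
  have Bpos: "B k > 0" for k unfolding B_def using S by (simp add: add_pos_nonneg sum_nonneg)
  define T where "T = {k \<in> {1..I}. \<theta> k > pk N \<theta> S k}"
  have one: "1 \<in> T"
  proof -
    have "pk N \<theta> S 1 = N 1 * \<theta> 1 / (S + N 1)" unfolding pk_def by simp
    also have "\<dots> < \<theta> 1"
      using S tpos I1 Npos by (auto simp: field_simps)
    finally show ?thesis unfolding T_def using I1 by auto
  qed
  define K where "K = Ksp I N \<theta> S"
  have KT: "K \<in> T" and Kmax: "\<And>k. k \<in> T \<Longrightarrow> k \<le> K"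
  proof -
    have fin: "finite T" unfolding T_def by simp
    have ne: "T \<noteq> {}" using one by auto
    have "Ksp I N \<theta> S = Max T" unfolding Ksp_def T_def ..
    thus "K \<in> T" "\<And>k. k \<in> T \<Longrightarrow> k \<le> K"
      unfolding K_def using Max_in[OF fin ne] Max_ge[OF fin] by auto
  qed
  define p where "p = pk N \<theta> S K"
  have K1: "1 \<le> K" "K \<le> I" and thK: "\<theta> K > p" using KT unfolding T_def p_def by auto
  have Apos: "A K > 0" unfolding A_def
    using K1 Npos tpos
  proof (intro sum_pos)
    fix i assume i: "i \<in> {1..K}"
    hence "i \<in> {1..I}" using K1 by auto
    hence "N i \<ge> 1" "\<theta> i > 0" using Npos tpos by auto
    thus "real (N i) * \<theta> i > 0" by simp
  qed auto
  have ppos: "p > 0" unfolding p_def pkAB using Apos Bpos by simp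
  have low: "\<theta> i > p" if "i \<in> {1..K}" for i
  proof (cases "i = K")
    case False
    hence "i < K" "i \<in> {1..I}" "K \<in> {1..I}" using that K1 by auto
    hence "\<theta> i > \<theta> K" using mono by blast
    thus ?thesis using thK by simp
  qed (use thK in simp)
  have high1: "\<theta> (K+1) \<le> p" if "K + 1 \<le> I"
  proof -
    have "K + 1 \<notin> T" using Kmax by force
    hence le: "\<theta> (K+1) \<le> A (K+1) / B (K+1)" using that unfolding T_def pkAB by auto
    have "A (K+1) = A K + N (K+1) * \<theta> (K+1)" "B (K+1) = B K + N (K+1)"
      unfolding A_def B_def by simp_all
    with le Bpos[of "K+1"] have "\<theta> (K+1) * (B K + N (K+1)) \<le> A K + N (K+1) * \<theta> (K+1)"
      by (simp add: field_simps)
    hence "\<theta> (K+1) * B K \<le> A K" by (simp add: algebra_simps)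
    thus ?thesis unfolding p_def pkAB using Bpos[of K] by (simp add: field_simps)
  qed
  have high: "\<theta> i \<le> p" if "i \<in> {K+1..I}" for i
  proof (cases "i = K+1")
    case True thus ?thesis using high1 that by auto
  next
    case False
    hence "K+1 < i" "i \<in> {1..I}" "K+1 \<in> {1..I}" using that K1 by auto
    hence "\<theta> i < \<theta> (K+1)" using mono by blast
    thus ?thesis using high1 that by auto
  qed
  have dlow: "demand (\<theta> i) p = \<theta> i / p - 1" if "i \<in> {1..K}" for i
    using low[OF that] ppos unfolding demand_def pos_part_def by (simp add: field_simps)
  have dhigh: "demand (\<theta> i) p = 0" if "i \<in> {K+1..I}" for i
    using high[OF that] ppos unfolding demand_def pos_part_def by (simp add: field_simps)
  have split: "{1..I} = {1..K} \<union> {K+1..I}" using K1 by auto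
  have used: "used I \<theta> p N = S"
  proof -
    have "used I \<theta> p N = (\<Sum>i=1..K. real (N i) * demand (\<theta> i) p) + (\<Sum>i=K+1..I. real (N i) * demand (\<theta> i) p)"
      unfolding used_def split by (rule sum.union_disjoint) auto
    also have "\<dots> = (\<Sum>i=1..K. real (N i) * (\<theta> i / p - 1))"
      using dlow dhigh by simp
    also have "\<dots> = A K / p - (\<Sum>i=1..K. real (N i))"
      unfolding A_def by (simp add: algebra_simps sum_subtractf sum_divide_distrib)
    also have "\<dots> = S" using ppos Bpos[of K] Apos unfolding p_def pkAB B_def
      by (simp add: field_simps)
    finally show ?thesis .
  qed
  have feas: "feasible I N \<theta> S p N" unfolding feasible_def using ppos used by auto
  have opt: "revenue I \<theta> q n \<le> revenue I \<theta> p N" if f: "feasible I N \<theta> S q n" for q n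
  proof -
    have q: "q > 0" and nN: "\<forall>i\<in>{1..I}. n i \<le> N i" and u: "used I \<theta> q n \<le> S"
      using f unfolding feasible_def by auto
    have r: "revenue I \<theta> p N = p * S" unfolding revenue_def used ..
    show ?thesis
    proof (cases "q \<le> p")
      case True
      have "used I \<theta> q n \<ge> 0" unfolding used_def demand_def pos_part_def
        by (intro sum_nonneg) auto
      hence "revenue I \<theta> q n \<le> q * S" unfolding revenue_def using u q
        by (simp add: mult_left_mono)
      also have "\<dots> \<le> p * S" using True S by (simp add: mult_right_mono)
      finally show ?thesis using r by simp
    next
      case False
      have "revenue I \<theta> q n = (\<Sum>i=1..I. real (n i) * max (\<theta> i - q) 0)" using rev_eq q .
      also have "\<dots> \<le> (\<Sum>i=1..I. real (N i) * max (\<theta> i - p) 0)"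
      proof (rule sum_mono)
        fix i assume i: "i \<in> {1..I}"
        have "real (n i) * max (\<theta> i - q) 0 \<le> real (N i) * max (\<theta> i - q) 0"
          using nN i by (intro mult_right_mono) auto
        also have "\<dots> \<le> real (N i) * max (\<theta> i - p) 0"
          using False by (intro mult_left_mono) auto
        finally show "real (n i) * max (\<theta> i - q) 0 \<le> real (N i) * max (\<theta> i - p) 0" .
      qed
      also have "\<dots> = revenue I \<theta> p N" using rev_eq ppos by simp
      finally show ?thesis .
    qed
  qed
  show ?thesis
    using one feas opt dlow dhigh unfolding T_def p_def K_def by blast
qed

end
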